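(* Let $p,q\ge 3$ be distinct, relatively prime odd integers. Then $$p\sum_{n=1}^{q-1}\frac{\cot(\pi n/q)\cot(\pi np/q)}{\sin^4(\pi n/q)}+q\sum_{n=1}^{p-1}\frac{\cot(\pi n/p)\cot(\pi nq/p)}{\sin^4(\pi n/p)}=\frac{2p^6+2q^6-7p^4q^2-7p^2q^4+7p^4+7q^4-35p^2q^2+31}{945}.$$ *)

theory Defs
  imports Complex_Main
begin

end

theory Submission
  imports Defs "HOL-Analysis.Analysis" "HOL-Computational_Algebra.Polynomial"
begin



lemma choose_prod: "(of_nat (n choose k) :: 'a::field_char_0) = (\<Prod>i<k. of_nat n - of_nat i) / fact k"
  by (simp add: binomial_gbinomial gbinomial_prod_rev atLeast0LessThan)

lemma choose_vals:
  fixes n :: nat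
  defines "X \<equiv> (of_nat n :: complex)"
  shows "(of_nat (n choose 2) :: complex) = X*(X-1)/2"
    "(of_nat (n choose 3) :: complex) = X*(X-1)*(X-2)/6"
    "(of_nat (n choose 4) :: complex) = X*(X-1)*(X-2)*(X-3)/24"
    "(of_nat (n choose 5) :: complex) = X*(X-1)*(X-2)*(X-3)*(X-4)/120"
    "(of_nat (n choose 6) :: complex) = X*(X-1)*(X-2)*(X-3)*(X-4)*(X-5)/720"
    "(of_nat (n choose 7) :: complex) = X*(X-1)*(X-2)*(X-3)*(X-4)*(X-5)*(X-6)/5040"
  by (simp_all add: X_def choose_prod eval_nat_numeral lessThan_Suc fact_numeral mult_ac)

definition ucoef :: "complex \<Rightarrow> nat \<Rightarrow> complex" where
 "ucoef X k = (if k = 0 then 2 else if k = 1 then 1 else if k = 2 then (X^2-1)/6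
    else if k = 3 then (1-X^2)/12
    else if k = 4 then -19/360 + X^2/18 - X^4/360
    else if k = 5 then 3/80 - X^2/24 + X^4/240
    else if k = 6 then -863/30240 + X^2/30 - 7*X^4/1440 + X^6/15120
    else 0)"

definition cs :: "complex \<Rightarrow> complex \<Rightarrow> nat \<Rightarrow> complex" where
 "cs X Y k = (if k = 0 then 8 else if k = 1 then 20 else if k = 2 then 50/3 + 2/3*Y^2 + 2/3*X^2
    else if k = 3 then 5 + X^2 + Y^2
    else if k = 4 then 3/10 + Y^2/3 - Y^4/90 + X^2/3 + X^2*Y^2/18 - X^4/90
    else if k = 5 then -1/60 - Y^4/180 + X^2*Y^2/36 - X^4/180
    else if k = 6 then 31/7560 + Y^4/1080 + Y^6/3780 - X^2*Y^2/216 - X^2*Y^4/1080 + X^4/1080 - X^4*Y^2/1080 + X^6/3780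
    else 0)"

definition lcoef :: "nat \<Rightarrow> complex" where
  "lcoef k = (if k = 0 then 2 else if k = 1 then 3 else if k = 2 then 1 else 0)"

lemma sum_upto7:
  assumes "k < 7"
  shows "(\<Sum>i\<le>k. f i) = (\<Sum>i\<in>{0,1,2,3,4,5,6::nat}. if i \<le> k then f i else 0)"
proof -
  have e: "{0,1,2,3,4,5,6::nat} \<inter> {..k} = {..k}" using assms by auto
  have "(\<Sum>i\<in>{0,1,2,3,4,5,6::nat}. if i \<le> k then f i else 0) = (\<Sum>i\<in>{0,1,2,3,4,5,6::nat} \<inter> {..k}. f i)"
    by (subst sum.inter_restrict) (auto simp: atMost_iff)
  then show ?thesis by (simp only: e)
qed

lemma k7_cases: "(k::nat) < 7 \<Longrightarrow> k = 0 \<or> k = 1 \<or> k = 2 \<or> k = 3 \<or> k = 4 \<or> k = 5 \<or> k = 6"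
  by auto

lemma ident1:
  fixes p :: nat and k :: nat
  defines "X \<equiv> (of_nat p :: complex)"
  assumes "k < 7"
  shows "(\<Sum>i\<le>k. ucoef X i * of_nat (p choose Suc (k-i))) = X * (of_nat (p choose k) + (if k = 0 then 1 else 0))"
  using k7_cases[OF assms(2)]
  apply (elim disjE)
  apply (simp_all add: sum_upto7 ucoef_def choose_vals X_def[symmetric] numeral_2_eq_2[symmetric])
  apply (simp_all add: field_simps)
  apply (simp_all add: eval_nat_numeral algebra_simps)
  done

lemma ident2:
  fixes X Y :: complex and k :: nat
  assumes "k < 7"
  shows "cs X Y k = (\<Sum>i\<le>k. (\<Sum>j\<le>i. lcoef j * ucoef X (i-j)) * ucoef Y (k-i))"
  using k7_cases[OF assms(1)]
  apply (elim disjE)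
  apply (simp_all add: sum_upto7 ucoef_def cs_def lcoef_def)
  apply (simp_all add: field_simps)
  done

definition Ap :: "nat \<Rightarrow> complex poly" where
  "Ap p = poly_shift 1 ([:1,1:]^p - 1)"

lemma coeff_H_pow: "coeff ([:1,1:]^n :: 'a::{comm_semiring_1} poly) i = of_nat (n choose i)"
proof (cases "i \<le> n")
  case True then show ?thesis by (simp add: coeff_linear_poly_power)
next
  case False
  hence "coeff ([:1,1:]^n :: 'a poly) i = 0"
    by (intro coeff_eq_0) (simp add: degree_linear_power)
  thus ?thesis using False by (simp add: binomial_eq_0)
qed

lemma coeff_Ap: "coeff (Ap p) k = of_nat (p choose Suc k)"
  by (simp add: Ap_def coeff_poly_shift coeff_H_pow)

lemma Ap_pCons: "pCons 0 (Ap p) = [:1,1:]^p - 1"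
  by (rule poly_eqI) (auto simp: coeff_pCons coeff_Ap coeff_H_pow split: nat.split)

definition Bp :: "nat \<Rightarrow> complex poly" where
  "Bp p = [:1,1:]^p + 1"

lemma coeff_Bp: "coeff (Bp p) k = of_nat (p choose k) + (if k = 0 then 1 else 0)"
  by (simp add: Bp_def coeff_H_pow)

definition Up :: "complex \<Rightarrow> complex poly" where
  "Up X = (\<Sum>k\<le>6. monom (ucoef X k) k)"

lemma coeff_Up: "coeff (Up X) k = ucoef X k"
  by (simp add: Up_def coeff_sum coeff_monom) (auto simp: ucoef_def)

definition Alpha :: "complex \<Rightarrow> complex \<Rightarrow> complex poly" where
  "Alpha X Y = (\<Sum>k\<le>6. monom (cs X Y k) k)"

lemma coeff_Alpha: "coeff (Alpha X Y) k = (if k \<le> 6 then cs X Y k else 0)"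
  by (simp add: Alpha_def coeff_sum coeff_monom)

definition Lin :: "complex poly" where "Lin = [:2,3,1:]"

lemma coeff_Lin: "coeff Lin k = lcoef k"
  by (auto simp: Lin_def lcoef_def coeff_pCons split: nat.split)

definition cong7 :: "complex poly \<Rightarrow> complex poly \<Rightarrow> bool" where
  "cong7 A B \<longleftrightarrow> (\<forall>k<7. coeff A k = coeff B k)"

lemma cong7_mult: "cong7 A B \<Longrightarrow> cong7 (A*C) (B*C)"
  unfolding cong7_def coeff_mult by (auto intro!: sum.cong)

lemma cong7_mult_left: "cong7 A B \<Longrightarrow> cong7 (C*A) (C*B)"
  using cong7_mult[of A B C] by (simp add: mult.commute)

lemma cong7_trans: "cong7 A B \<Longrightarrow> cong7 B C \<Longrightarrow> cong7 A C"
  unfolding cong7_def by auto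

lemma cong1: "cong7 (Up (of_nat p) * Ap p) (smult (of_nat p) (Bp p))"
  unfolding cong7_def coeff_mult
  by (auto simp: coeff_Up coeff_Ap coeff_Bp ident1)

lemma cong2: "cong7 (Alpha X Y) (Lin * Up X * Up Y)"
  unfolding cong7_def coeff_mult
  by (auto simp: coeff_Up coeff_Lin coeff_Alpha ident2)

lemma cong3:
  fixes p q :: nat
  defines "X \<equiv> (of_nat p :: complex)" and "Y \<equiv> (of_nat q :: complex)"
  shows "cong7 (Alpha X Y * (Ap p * Ap q)) (smult (X*Y) (Lin * Bp p * Bp q))"
proof -
  have "cong7 (Alpha X Y * (Ap p * Ap q)) (Lin * Up X * Up Y * (Ap p * Ap q))"
    by (rule cong7_mult[OF cong2])
  also have "Lin * Up X * Up Y * (Ap p * Ap q) = (Lin * (Up Y * Ap q)) * (Up X * Ap p)"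
    by (simp add: mult_ac)
  finally have 1: "cong7 (Alpha X Y * (Ap p * Ap q)) ((Lin * (Up Y * Ap q)) * (Up X * Ap p))" .
  have 2: "cong7 ((Lin * (Up Y * Ap q)) * (Up X * Ap p)) ((Lin * (Up Y * Ap q)) * smult X (Bp p))"
    by (rule cong7_mult_left) (use cong1[of p] in \<open>simp add: X_def\<close>)
  have 3: "cong7 ((Lin * smult X (Bp p)) * (Up Y * Ap q)) ((Lin * smult X (Bp p)) * smult Y (Bp q))"
    by (rule cong7_mult_left) (use cong1[of q] in \<open>simp add: Y_def\<close>)
  have e1: "(Lin * (Up Y * Ap q)) * smult X (Bp p) = (Lin * smult X (Bp p)) * (Up Y * Ap q)"
    by (simp add: mult_ac)
  have e2: "(Lin * smult X (Bp p)) * smult Y (Bp q) = smult (X*Y) (Lin * Bp p * Bp q)"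
    by (simp add: mult_ac)
  show ?thesis using cong7_trans[OF 1 cong7_trans[OF 2 3[folded e1]]] e2 by simp
qed



lemma lagrange_sum:
  fixes E \<beta> :: "'a::field poly"
  assumes fin: "finite Z" and cardZ: "card Z = degree E" and roots: "\<And>z. z \<in> Z \<Longrightarrow> poly E z = 0"
    and degb: "degree \<beta> < degree E"
  shows "(\<Sum>z\<in>Z. poly \<beta> z / poly (pderiv E) z) = coeff \<beta> (degree E - 1) / lead_coeff E"
proof -
  define m where "m = degree E"
  have m1: "m \<ge> 1" using degb m_def by simp
  have E0: "E \<noteq> 0" using m1 m_def by auto
  define L where "L z = E div [:-z,1:]" for z
  have EL: "E = [:-z,1:] * L z" if "z \<in> Z" for z
    using roots[OF that] unfolding L_def poly_eq_0_iff_dvd by (metis dvd_mult_div_cancel)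
  have L0: "L z \<noteq> 0" if "z \<in> Z" for z using EL[OF that] E0 by auto
  have degL: "degree (L z) = m - 1" if "z \<in> Z" for z
  proof -
    have "degree E = degree [:-z,1:] + degree (L z)"
      by (subst EL[OF that], rule degree_mult_eq) (use L0[OF that] in auto)
    thus ?thesis using m_def by simp
  qed
  have lcL: "lead_coeff (L z) = lead_coeff E" if "z \<in> Z" for z
  proof -
    have "lead_coeff ([:-z,1:] * L z) = lead_coeff [:-z,1:] * lead_coeff (L z)"
      by (rule lead_coeff_mult)
    thus ?thesis using EL[OF that] by simp
  qed
  have Lw: "poly (L z) w = 0" if "z \<in> Z" "w \<in> Z" "w \<noteq> z" for z w
  proof -
    have "poly E w = 0" using roots that by auto
    moreover have "poly E w = (w - z) * poly (L z) w"
      using arg_cong[OF EL[OF that(1)], of "\<lambda>P. poly P w"] by (simp add: algebra_simps)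
    ultimately show ?thesis using that by simp
  qed
  have dE: "poly (pderiv E) z = poly (L z) z" if "z \<in> Z" for z
  proof -
    have "pderiv E = [:-z,1:] * pderiv (L z) + L z * pderiv [:-z,1:]"
      using EL[OF that] pderiv_mult by metis
    moreover have "pderiv [:-z,1:] = 1" by (simp add: pderiv_pCons)
    ultimately show ?thesis by (simp only: poly_add poly_mult) simp
  qed
  have Lz: "poly (L z) z \<noteq> 0" if "z \<in> Z" for z
  proof
    assume "poly (L z) z = 0"
    hence "Z \<subseteq> {x. poly (L z) x = 0}" using Lw[OF that] by auto
    hence "card Z \<le> card {x. poly (L z) x = 0}"
      by (intro card_mono poly_roots_finite L0 that)
    also have "\<dots> \<le> degree (L z)" by (rule card_poly_roots_bound[OF L0[OF that]])
    finally show False using degL[OF that] cardZ m_def m1 by simp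
  qed
  define Q where "Q = (\<Sum>z\<in>Z. smult (poly \<beta> z / poly (pderiv E) z) (L z))"
  have polyQ: "poly Q w = poly \<beta> w" if "w \<in> Z" for w
  proof -
    have "poly Q w = (\<Sum>z\<in>Z. poly \<beta> z / poly (pderiv E) z * poly (L z) w)"
      by (simp add: Q_def poly_sum)
    also have "\<dots> = (\<Sum>z\<in>{w}. poly \<beta> z / poly (pderiv E) z * poly (L z) w)"
      by (rule sum.mono_neutral_right) (use fin that Lw in auto)
    also have "\<dots> = poly \<beta> w" using dE[OF that] Lz[OF that] by simp
    finally show ?thesis .
  qed
  have coeffQ: "coeff Q k = (\<Sum>z\<in>Z. poly \<beta> z / poly (pderiv E) z * coeff (L z) k)" for k
    by (simp add: Q_def coeff_sum)
  have degQ: "degree Q \<le> m - 1"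
  proof (rule degree_le, intro allI impI)
    fix k assume "m - 1 < k"
    thus "coeff Q k = 0" unfolding coeffQ
      by (intro sum.neutral ballI) (auto simp: degL coeff_eq_0)
  qed
  have "Q = \<beta>"
    by (rule poly_eqI_degree[of Z]) (use polyQ degQ degb m_def cardZ m1 in auto)
  hence "coeff \<beta> (m - 1) = (\<Sum>z\<in>Z. poly \<beta> z / poly (pderiv E) z * lead_coeff E)"
    using coeffQ[of "m-1"] degL lcL by (auto intro!: sum.cong)
  also have "\<dots> = (\<Sum>z\<in>Z. poly \<beta> z / poly (pderiv E) z) * lead_coeff E"
    by (simp add: sum_distrib_right)
  finally show ?thesis using E0 m_def by (simp add: field_simps)
qed



definition Ep :: "nat \<Rightarrow> nat \<Rightarrow> complex poly" where "Ep p q = Ap p * Ap q"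
definition Nt :: "nat \<Rightarrow> nat \<Rightarrow> complex poly" where "Nt p q = Lin * Bp p * Bp q"
definition Pp :: "nat \<Rightarrow> nat \<Rightarrow> complex poly" where
  "Pp p q = smult (of_nat p * of_nat q) (Nt p q) - Alpha (of_nat p) (of_nat q) * Ep p q"
definition beta :: "nat \<Rightarrow> nat \<Rightarrow> complex poly" where "beta p q = poly_shift 7 (Pp p q)"

lemma cs_sym: "cs X Y k = cs Y X k"
  by (simp add: cs_def algebra_simps)

lemma Pp_sym: "Pp p q = Pp q p"
proof -
  have "Alpha (of_nat p) (of_nat q) = Alpha (of_nat q) (of_nat p)"
    unfolding Alpha_def using cs_sym by presburger
  thus ?thesis by (simp add: Pp_def Nt_def Ep_def mult_ac)
qed

lemma Ep_sym: "Ep p q = Ep q p" by (simp add: Ep_def mult_ac)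

lemma Pp_low: "k < 7 \<Longrightarrow> coeff (Pp p q) k = 0"
  using cong3[of p q] unfolding cong7_def Pp_def Nt_def Ep_def by auto

lemma Pp_eq: "Pp p q = monom 1 7 * beta p q"
  by (rule poly_eqI) (auto simp: coeff_monom_mult beta_def coeff_poly_shift Pp_low)

lemma poly_Pp: "poly (Pp p q) x = x^7 * poly (beta p q) x"
  by (subst Pp_eq) (simp add: poly_monom)

lemma coeff_mult_top:
  fixes A B :: "'a::comm_semiring_1 poly"
  assumes "degree A \<le> a" "degree B \<le> b"
  shows "coeff (A*B) (a+b) = coeff A a * coeff B b"
proof -
  have "coeff (A*B) (a+b) = (\<Sum>i\<le>a+b. if i = a then coeff A a * coeff B b else 0)"
    unfolding coeff_mult
  proof (rule sum.cong)
    fix i assume "i \<in> {..a+b}"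
    show "coeff A i * coeff B (a + b - i) = (if i = a then coeff A a * coeff B b else 0)"
    proof (cases "i < a")
      case True then have "coeff B (a+b-i) = 0" using assms by (intro coeff_eq_0) auto
      then show ?thesis using True by auto
    next
      case False
      then show ?thesis using assms by (cases "i = a") (auto simp: coeff_eq_0)
    qed
  qed simp
  also have "\<dots> = coeff A a * coeff B b" by simp
  finally show ?thesis .
qed

lemma degree_Ap: "p \<ge> 1 \<Longrightarrow> degree (Ap p) = p - 1"
proof -
  assume p: "p \<ge> 1"
  have "degree (Ap p) \<le> p - 1"
    by (rule degree_le) (auto simp: coeff_Ap binomial_eq_0)
  moreover have "coeff (Ap p) (p-1) \<noteq> 0" using p by (simp add: coeff_Ap)
  hence "p - 1 \<le> degree (Ap p)" by (rule le_degree)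
  ultimately show ?thesis by simp
qed

lemma lc_Ap: "p \<ge> 1 \<Longrightarrow> lead_coeff (Ap p) = 1"
  by (simp add: degree_Ap coeff_Ap)

lemma Ap_nz: "p \<ge> 1 \<Longrightarrow> Ap p \<noteq> 0"
  using lc_Ap by force

lemma degree_Ep: "p \<ge> 1 \<Longrightarrow> q \<ge> 1 \<Longrightarrow> degree (Ep p q) = p + q - 2"
  by (simp add: Ep_def degree_mult_eq Ap_nz degree_Ap)

lemma lc_Ep: "p \<ge> 1 \<Longrightarrow> q \<ge> 1 \<Longrightarrow> lead_coeff (Ep p q) = 1"
  by (simp add: Ep_def lead_coeff_mult lc_Ap)

lemma degree_Bp: "degree (Bp p) \<le> p"
  by (rule degree_le) (auto simp: coeff_Bp binomial_eq_0)

lemma degree_Lin: "degree Lin \<le> 2" by (simp add: Lin_def)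

lemma degree_Nt: "degree (Nt p q) \<le> p + q + 2"
proof -
  have "degree (Nt p q) \<le> degree Lin + degree (Bp p) + degree (Bp q)"
    unfolding Nt_def using degree_mult_le[of "Lin * Bp p" "Bp q"] degree_mult_le[of Lin "Bp p"] by linarith
  thus ?thesis using degree_Lin degree_Bp[of p] degree_Bp[of q] by linarith
qed

lemma degree_Alpha: "degree (Alpha X Y) \<le> 6"
  by (rule degree_le) (simp add: coeff_Alpha)

lemma beta_facts:
  assumes "p \<ge> 1" "q \<ge> 1" "p + q \<ge> 3"
  shows "degree (beta p q) < degree (Ep p q)"
    "coeff (beta p q) (degree (Ep p q) - 1) = - cs (of_nat p) (of_nat q) 6"
proof -
  define m where "m = p + q - 2"
  have dE: "degree (Ep p q) = m" using assms degree_Ep m_def by simp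
  have m1: "m \<ge> 1" using assms m_def by simp
  have cAE: "coeff (Alpha (of_nat p) (of_nat q) * Ep p q) (6 + m) = cs (of_nat p) (of_nat q) 6"
    using coeff_mult_top[OF degree_Alpha, of "Ep p q" m "of_nat p" "of_nat q"] dE lc_Ep[OF assms(1,2)]
    by (simp add: coeff_Alpha)
  have dAE: "degree (Alpha (of_nat p) (of_nat q) * Ep p q) \<le> m + 6"
    using degree_mult_le[of "Alpha (of_nat p) (of_nat q)" "Ep p q"] degree_Alpha[of "of_nat p" "of_nat q"] dE
    by linarith
  have dN: "degree (smult (of_nat p * of_nat q :: complex) (Nt p q)) \<le> m + 4"
    using degree_Nt[of p q] degree_smult_le[of "of_nat p * of_nat q :: complex" "Nt p q"] m_def assms by linarith
  have dP: "degree (Pp p q) \<le> m + 6"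
    unfolding Pp_def using degree_diff_le_max[of "smult (of_nat p * of_nat q :: complex) (Nt p q)" "Alpha (of_nat p) (of_nat q) * Ep p q"] dN dAE by linarith
  have cP: "coeff (Pp p q) (m + 6) = - cs (of_nat p) (of_nat q) 6"
  proof -
    have "coeff (smult (of_nat p * of_nat q :: complex) (Nt p q)) (m+6) = 0"
      using dN by (intro coeff_eq_0) simp
    thus ?thesis unfolding Pp_def using cAE by (simp add: add.commute)
  qed
  have "degree (beta p q) \<le> m - 1"
    by (rule degree_le) (use dP m1 in \<open>auto simp: beta_def coeff_poly_shift intro!: coeff_eq_0\<close>)
  thus "degree (beta p q) < degree (Ep p q)" using dE m1 by simp
  show "coeff (beta p q) (degree (Ep p q) - 1) = - cs (of_nat p) (of_nat q) 6"
    using cP dE m1 by (simp add: beta_def coeff_poly_shift add.commute)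
qed

lemma poly_Ap: "x * poly (Ap p) x = (1+x)^p - 1"
proof -
  have "poly (pCons 0 (Ap p)) x = poly ([:1,1:]^p - 1) x" by (simp only: Ap_pCons)
  thus ?thesis by (simp add: poly_power add.commute)
qed

lemma pderiv_Ap: "poly (Ap p) x + x * poly (pderiv (Ap p)) x = of_nat p * (1+x)^(p-1)"
proof -
  have "pderiv (pCons 0 (Ap p)) = pderiv ([:1,1:]^p - 1)" by (simp only: Ap_pCons)
  hence "Ap p + pCons 0 (pderiv (Ap p)) = smult (of_nat p) ([:1,1:]^(p-1))"
    by (simp add: pderiv_pCons pderiv_power pderiv_diff)
  hence "poly (Ap p + pCons 0 (pderiv (Ap p))) x = poly (smult (of_nat p) ([:1,1:]^(p-1))) x" by simp
  thus ?thesis by (simp add: poly_power add.commute)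
qed

lemma aux_frac: fixes X Q w z a :: complex assumes "z\<noteq>0" "w\<noteq>0" "Q\<noteq>0" "a-1\<noteq>0"
  shows "(X*Q*(2*w*(w+1)*(a+1))/z^7) / ((a-1)*Q/(w*z^2)) = 2*X*w^2*(w+1)*(a+1)/(z^5*(a-1))"
proof -
  have "z^7 = z^5 * z^2" by simp
  then show ?thesis using assms by (simp add: field_simps power2_eq_square)
qed

lemma term_eval:
  assumes wq: "w^q = 1" and w1: "w \<noteq> 1" and wp: "w^p \<noteq> 1" and q: "q \<ge> 1"
  shows "poly (beta p q) (w-1) / poly (pderiv (Ep p q)) (w-1)
         = 2 * of_nat p * w^2 * (w+1) * (w^p+1) / ((w-1)^5 * (w^p-1))"
proof -
  define z where "z = w - 1"
  have z0: "z \<noteq> 0" using w1 z_def by simp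
  have w: "w = 1 + z" using z_def by simp
  obtain r where r: "q = Suc r" using q by (cases q) auto
  have w0: "w \<noteq> 0" using wq r by auto
  have Aq: "poly (Ap q) z = 0" using poly_Ap[of z q] wq w z0 by simp
  have Ap: "poly (Ap p) z = (w^p - 1) / z" using poly_Ap[of z p] w z0 by (simp add: field_simps)
  have dAq: "poly (pderiv (Ap q)) z = of_nat q * w^(q-1) / z"
    using pderiv_Ap[of q z] Aq w z0 by (simp add: field_simps)
  have wq1: "w^(q - Suc 0) = 1 / w" using wq r w0 by (simp add: field_simps)
  have dE: "poly (pderiv (Ep p q)) z = (w^p - 1) * of_nat q / (w * z^2)"
    by (simp add: Ep_def pderiv_mult Aq Ap dAq wq1 power2_eq_square)
  have PE: "poly (Pp p q) z = of_nat p * of_nat q * (2 * w * (w + 1) * (w^p + 1))"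
  proof -
    have L: "poly Lin z = w * (w + 1)" by (simp add: Lin_def w algebra_simps power2_eq_square)
    have B: "poly (Bp n) z = w^n + 1" for n by (simp add: Bp_def poly_power w add.commute)
    have "poly (Ep p q) z = 0" by (simp add: Ep_def Aq)
    hence "poly (Pp p q) z = of_nat p * of_nat q * (poly Lin z * poly (Bp p) z * poly (Bp q) z)"
      by (simp add: Pp_def Nt_def)
    also have "\<dots> = of_nat p * of_nat q * (2 * w * (w + 1) * (w^p + 1))"
      by (simp add: L B wq)
    finally show ?thesis .
  qed
  have bz: "poly (beta p q) z = poly (Pp p q) z / z^7" using poly_Pp[of p q z] z0 by simp
  have q0: "(of_nat q :: complex) \<noteq> 0" using q by simp
  have wp1: "w^p - 1 \<noteq> 0" using wp by simp
  show ?thesis unfolding z_def[symmetric] bz PE dE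
    using aux_frac[OF z0 w0 q0 wp1, of "of_nat p"] by (simp add: mult.assoc)
qed



lemma exp_it: "exp (\<i> * complex_of_real t) = of_real (cos t) + \<i> * of_real (sin t)"
  by (simp add: cis_conv_exp[symmetric] complex_eq_iff)

lemma trig_cot_sin:
  fixes t :: real
  defines "a \<equiv> exp (2 * \<i> * complex_of_real t)"
  assumes a1: "a \<noteq> 1"
  shows "complex_of_real (cot t) = \<i> * (a + 1) / (a - 1)"
    and "complex_of_real (sin t ^ 4) = (a - 1)^4 / (16 * a^2)"
proof -
  define c where "c = complex_of_real (cos t)"
  define s where "s = complex_of_real (sin t)"
  define e where "e = exp (\<i> * complex_of_real t)"
  have e: "e = c + \<i> * s" using exp_it[of t] by (simp add: e_def c_def s_def)
  have cs1: "c^2 + s^2 = 1" unfolding c_def s_def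
    by (metis of_real_add of_real_power of_real_1 sin_cos_squared_add2)
  have ii: "\<i> * \<i> = -1" by simp
  have ae: "a = e^2" unfolding a_def e_def by (simp add: exp_of_nat_mult[symmetric] mult_ac)
  have e0: "e \<noteq> 0" by (simp add: e_def)
  have ap: "a + 1 = 2 * c * e" unfolding ae e using cs1 ii by algebra
  have am: "a - 1 = 2 * \<i> * s * e" unfolding ae e using cs1 ii by algebra
  have s0: "s \<noteq> 0" using am a1 by auto
  have sin0: "sin t \<noteq> 0" using s0 s_def by auto
  show "complex_of_real (cot t) = \<i> * (a + 1) / (a - 1)"
    unfolding ap am using e0 s0 by (simp add: cot_def c_def s_def field_simps)
  show "complex_of_real (sin t ^ 4) = (a - 1)^4 / (16 * a^2)"
  proof -
    have "(a - 1)^4 / (16 * a^2) = (2 * \<i> * s * e)^4 / (16 * (e^2)^2)"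
      by (subst am, subst ae) (rule refl)
    also have "\<dots> = s^4" using e0 by (simp add: field_simps eval_nat_numeral)
    finally show ?thesis by (simp add: s_def)
  qed
qed

lemma trig_term:
  fixes t :: real and p :: nat
  defines "a \<equiv> exp (2 * \<i> * complex_of_real t)"
  assumes a1: "a \<noteq> 1" and ap1: "a^p \<noteq> 1"
  shows "complex_of_real (cot t * cot (real p * t) / sin t ^ 4)
         = -16 * a^2 * (a+1) * (a^p+1) / ((a-1)^5 * (a^p-1))"
proof -
  have ap: "a^p = exp (2 * \<i> * complex_of_real (real p * t))"
    unfolding a_def by (simp add: exp_of_nat_mult[symmetric] mult_ac)
  have c1: "complex_of_real (cot t) = \<i> * (a + 1) / (a - 1)"
    using trig_cot_sin(1)[of t] a1 a_def by simp
  have c2: "complex_of_real (cot (real p * t)) = \<i> * (a^p + 1) / (a^p - 1)"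
    using trig_cot_sin(1)[of "real p * t"] ap1 unfolding ap by simp
  have s4: "complex_of_real (sin t ^ 4) = (a - 1)^4 / (16 * a^2)"
    using trig_cot_sin(2)[of t] a1 a_def by simp
  have a0: "a \<noteq> 0" by (simp add: a_def)
  have "complex_of_real (cot t * cot (real p * t) / sin t ^ 4) =
        (\<i> * (a + 1) / (a - 1)) * (\<i> * (a^p + 1) / (a^p - 1)) / ((a - 1)^4 / (16 * a^2))"
    by (simp only: of_real_mult of_real_divide c1 c2 s4)
  also have "\<dots> = -16 * a^2 * (a+1) * (a^p+1) / ((a-1)^5 * (a^p-1))"
    using a1 ap1 a0 by (simp add: field_simps eval_nat_numeral)
  finally show ?thesis .
qed



definition om :: "nat \<Rightarrow> nat \<Rightarrow> complex" where
  "om q j = exp (2 * of_real pi * \<i> * of_nat j / of_nat q)"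

lemma om_pow: "om q j ^ p = om q (j * p)"
  unfolding om_def by (simp add: exp_of_nat_mult[symmetric] mult_ac)

lemma om_root: "q \<ge> 1 \<Longrightarrow> om q j ^ q = 1"
  unfolding om_def by (rule complex_root_unity) simp

lemma om_ne1: "q \<ge> 1 \<Longrightarrow> j \<in> {1..q-1} \<Longrightarrow> om q j \<noteq> 1"
  unfolding om_def by (subst complex_root_unity_eq_1) (auto dest: dvd_imp_le)

lemma om_p_ne1:
  assumes "q \<ge> 1" "coprime p q" "j \<in> {1..q-1}"
  shows "om q j ^ p \<noteq> 1"
proof -
  have "\<not> q dvd j * p"
  proof
    assume "q dvd j * p"
    hence "q dvd j" using assms(2) by (simp add: coprime_dvd_mult_left_iff coprime_commute)
    thus False using assms(3) by (auto dest: dvd_imp_le)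
  qed
  hence "om q (j * p) \<noteq> 1" unfolding om_def using assms(1) by (subst complex_root_unity_eq_1) auto
  thus ?thesis by (simp add: om_pow)
qed

lemma aux2: fixes X a b c d D :: complex
  shows "2 * X * a * b * c / D = - (X / 8) * (-16 * a * b * c / D)"
  by (simp add: field_simps)

lemma om_inj: "q \<ge> 1 \<Longrightarrow> inj_on (\<lambda>j. om q j - 1) {1..q-1}"
  unfolding inj_on_def om_def by (auto simp: complex_root_unity_eq)

lemma om_exp: "om q j = exp (2 * \<i> * complex_of_real (pi * real j / real q))"
  unfolding om_def by (simp add: mult_ac)

definition tt :: "nat \<Rightarrow> nat \<Rightarrow> nat \<Rightarrow> real" where
  "tt q p j = cot (pi * real j / real q) * cot (pi * real j * real p / real q) / sin (pi * real j / real q) ^ 4"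

lemma tt_complex:
  assumes "q \<ge> 1" "coprime p q" "j \<in> {1..q-1}"
  shows "complex_of_real (tt q p j) = -16 * om q j^2 * (om q j+1) * (om q j^p+1) / ((om q j-1)^5 * (om q j^p-1))"
proof -
  have e: "pi * real j * real p / real q = real p * (pi * real j / real q)" by simp
  show ?thesis unfolding tt_def e
    using trig_term[of "pi * real j / real q" p] om_ne1[OF assms(1,3)] om_p_ne1[OF assms]
    by (simp add: om_exp)
qed

lemma sum_Zq:
  assumes "q \<ge> 1" "p \<ge> 1" "coprime p q"
  shows "(\<Sum>z\<in>(\<lambda>j. om q j - 1) ` {1..q-1}. poly (beta p q) z / poly (pderiv (Ep p q)) z)
       = - (of_nat p / 8) * complex_of_real (\<Sum>j\<in>{1..q-1}. tt q p j)"
proof -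
  have "(\<Sum>z\<in>(\<lambda>j. om q j - 1) ` {1..q-1}. poly (beta p q) z / poly (pderiv (Ep p q)) z)
      = (\<Sum>j\<in>{1..q-1}. poly (beta p q) (om q j - 1) / poly (pderiv (Ep p q)) (om q j - 1))"
    by (subst sum.reindex[OF om_inj[OF assms(1)]]) simp
  also have "\<dots> = (\<Sum>j\<in>{1..q-1}. - (of_nat p / 8) * complex_of_real (tt q p j))"
  proof (rule sum.cong[OF refl])
    fix j assume j: "j \<in> {1..q-1}"
    show "poly (beta p q) (om q j - 1) / poly (pderiv (Ep p q)) (om q j - 1) = - (of_nat p / 8) * complex_of_real (tt q p j)"
      unfolding term_eval[OF om_root[OF assms(1)] om_ne1[OF assms(1) j] om_p_ne1[OF assms(1,3) j] assms(1)]
            tt_complex[OF assms(1,3) j]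
      by (rule aux2)
  qed
  also have "\<dots> = - (of_nat p / 8) * complex_of_real (\<Sum>j\<in>{1..q-1}. tt q p j)"
    by (simp add: sum_distrib_left)
  finally show ?thesis .
qed

lemma main_nat:
  fixes p q :: nat
  assumes p: "p \<ge> 2" and q: "q \<ge> 2" and cop: "coprime p q"
  shows "complex_of_real (real p * (\<Sum>j\<in>{1..q-1}. tt q p j) + real q * (\<Sum>j\<in>{1..p-1}. tt p q j))
         = 8 * cs (of_nat p) (of_nat q) 6"
proof -
  define Zq where "Zq = (\<lambda>j. om q j - 1) ` {1..q-1}"
  define Zp where "Zp = (\<lambda>j. om p j - 1) ` {1..p-1}"
  have p1: "p \<ge> 1" and q1: "q \<ge> 1" using p q by auto
  have cop': "coprime q p" using cop by (simp add: coprime_commute)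
  have disj: "Zq \<inter> Zp = {}"
  proof (rule ccontr)
    assume "Zq \<inter> Zp \<noteq> {}"
    then obtain z where "z \<in> Zq" "z \<in> Zp" by blast
    then obtain j k where j: "j \<in> {1..q-1}" and k: "k \<in> {1..p-1}" and "z = om q j - 1" "z = om p k - 1"
      unfolding Zq_def Zp_def by blast
    hence e: "om q j = om p k" by simp
    have "om q j ^ p \<noteq> 1" by (rule om_p_ne1[OF q1 cop j])
    moreover have "om p k ^ p = 1" by (rule om_root[OF p1])
    ultimately show False using e by simp
  qed
  have fin: "finite Zq" "finite Zp" unfolding Zq_def Zp_def by auto
  have cq: "card Zq = q - 1" unfolding Zq_def by (subst card_image[OF om_inj[OF q1]]) simp
  have cp: "card Zp = p - 1" unfolding Zp_def by (subst card_image[OF om_inj[OF p1]]) simp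
  have cardZ: "card (Zq \<union> Zp) = degree (Ep p q)"
    using card_Un_disjoint[OF fin disj] cq cp degree_Ep[OF p1 q1] p q by simp
  have rootq: "poly (Ap q) (om q j - 1) = 0" if "j \<in> {1..q-1}" for j
    using poly_Ap[of "om q j - 1" q] om_root[OF q1, of j] om_ne1[OF q1 that] by simp
  have rootp: "poly (Ap p) (om p j - 1) = 0" if "j \<in> {1..p-1}" for j
    using poly_Ap[of "om p j - 1" p] om_root[OF p1, of j] om_ne1[OF p1 that] by simp
  have roots: "poly (Ep p q) z = 0" if "z \<in> Zq \<union> Zp" for z
    using that rootq rootp unfolding Zq_def Zp_def Ep_def by auto
  have bf: "degree (beta p q) < degree (Ep p q)"
    "coeff (beta p q) (degree (Ep p q) - 1) = - cs (of_nat p) (of_nat q) 6"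
    using beta_facts[OF p1 q1] p q by auto
  have L: "(\<Sum>z\<in>Zq \<union> Zp. poly (beta p q) z / poly (pderiv (Ep p q)) z) = - cs (of_nat p) (of_nat q) 6"
    using lagrange_sum[OF _ cardZ roots bf(1)] fin bf(2) lc_Ep[OF p1 q1] by simp
  have sq: "(\<Sum>z\<in>Zq. poly (beta p q) z / poly (pderiv (Ep p q)) z)
       = - (of_nat p / 8) * complex_of_real (\<Sum>j\<in>{1..q-1}. tt q p j)"
    unfolding Zq_def by (rule sum_Zq[OF q1 p1 cop])
  have sp: "(\<Sum>z\<in>Zp. poly (beta p q) z / poly (pderiv (Ep p q)) z)
       = - (of_nat q / 8) * complex_of_real (\<Sum>j\<in>{1..p-1}. tt p q j)"
  proof -
    have "beta p q = beta q p" by (simp add: beta_def Pp_sym)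
    moreover have "Ep p q = Ep q p" by (rule Ep_sym)
    ultimately show ?thesis unfolding Zp_def using sum_Zq[OF p1 q1 cop'] by simp
  qed
  define A where "A = complex_of_real (\<Sum>j\<in>{1..q-1}. tt q p j)"
  define B where "B = complex_of_real (\<Sum>j\<in>{1..p-1}. tt p q j)"
  define C where "C = cs (of_nat p) (of_nat q) 6"
  have H: "- C = - (of_nat p / 8) * A - (of_nat q / 8) * B"
    using L unfolding sum.union_disjoint[OF fin disj] sq sp A_def[symmetric] B_def[symmetric] C_def[symmetric]
    by simp
  hence H2: "8 * C = of_nat p * A + of_nat q * B" by (simp add: field_simps)
  have "complex_of_real (real p * (\<Sum>j\<in>{1..q-1}. tt q p j) + real q * (\<Sum>j\<in>{1..p-1}. tt p q j))
        = of_nat p * A + of_nat q * B" unfolding A_def B_def by simp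
  thus ?thesis using H2 C_def by simp
qed



lemma rhs_eq:
  fixes p q :: nat
  shows "complex_of_real ((2 * real p^6 + 2 * real q^6 - 7 * real p^4 * real q^2 - 7 * real p^2 * real q^4 + 7 * real p^4 + 7 * real q^4 - 35 * real p^2 * real q^2 + 31) / 945)
       = 8 * cs (of_nat p) (of_nat q) 6"
  by (simp add: cs_def field_simps)

theorem mainTheorem18:
  fixes p q :: int
  assumes "p \<ge> 3" and "q \<ge> 3" and "p \<noteq> q" and "odd p" and "odd q"
    and "coprime p q"
  shows "real_of_int p * (\<Sum>n\<in>{1..q-1}. cot (pi * n / q) * cot (pi * n * p / q) / (sin (pi * n / q)) ^ 4)
       + real_of_int q * (\<Sum>n\<in>{1..p-1}. cot (pi * n / p) * cot (pi * n * q / p) / (sin (pi * n / p)) ^ 4)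
       = (2 * p^6 + 2 * q^6 - 7 * p^4 * q^2 - 7 * p^2 * q^4 + 7 * p^4 + 7 * q^4 - 35 * p^2 * q^2 + 31) / 945"
proof -
  obtain a where a: "p = int a" using assms(1) by (metis nonneg_int_cases order_trans zero_le_numeral)
  obtain b where b: "q = int b" using assms(2) by (metis nonneg_int_cases order_trans zero_le_numeral)
  have a3: "a \<ge> 3" and b3: "b \<ge> 3" using assms(1,2) a b by auto
  have cop: "coprime a b" using assms(6) a b by simp
  have S: "(\<Sum>n\<in>{1..int m - 1}. cot (pi * n / int m) * cot (pi * n * int k / int m) / (sin (pi * n / int m)) ^ 4)
        = (\<Sum>j\<in>{1..m-1}. tt m k j)" if "m \<ge> 1" for m k :: nat
  proof -
    have "{1..int m - 1} = int ` {1..m-1}" using that by (simp add: image_int_atLeastAtMost of_nat_diff)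
    thus ?thesis by (simp add: sum.reindex tt_def)
  qed
  have main: "complex_of_real (real a * (\<Sum>j\<in>{1..b-1}. tt b a j) + real b * (\<Sum>j\<in>{1..a-1}. tt a b j))
         = 8 * cs (of_nat a) (of_nat b) 6"
    by (rule main_nat) (use a3 b3 cop in auto)
  have "complex_of_real (real a * (\<Sum>j\<in>{1..b-1}. tt b a j) + real b * (\<Sum>j\<in>{1..a-1}. tt a b j))
     = complex_of_real ((2 * real a^6 + 2 * real b^6 - 7 * real a^4 * real b^2 - 7 * real a^2 * real b^4 + 7 * real a^4 + 7 * real b^4 - 35 * real a^2 * real b^2 + 31) / 945)"
    using main rhs_eq[of a b] by simp
  hence R: "real a * (\<Sum>j\<in>{1..b-1}. tt b a j) + real b * (\<Sum>j\<in>{1..a-1}. tt a b j)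
     = (2 * real a^6 + 2 * real b^6 - 7 * real a^4 * real b^2 - 7 * real a^2 * real b^4 + 7 * real a^4 + 7 * real b^4 - 35 * real a^2 * real b^2 + 31) / 945"
    by (simp only: of_real_eq_iff)
  show ?thesis
    unfolding a b using S[of b a] S[of a b] a3 b3 R by simp
qed

end
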